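(* Let $\kappa>0$, $g>0$, $p\ge0$, $\delta^2>0$, and let $h$ be a random variable with Gamma distribution of shape $\kappa$ and scale $g/\kappa$. Let $c=\log_2(1+ph/\delta^2)$, $\bar\gamma=pg/\delta^2$ and $\beta=e^{\psi(\kappa)}/\kappa$, where $\psi$ is the digamma function. Then $$\mathbb{E}\{c\}\ \ge\ \bar c\triangleq\log_2(1+\beta\bar\gamma).$$ Moreover, the bound is asymptotically tight: $\mathbb{E}\{c\}-\bar c\to0$ as $\bar\gamma\to\infty$ or as $\kappa\to\infty$. *)

theory Defs
  imports "HOL-Analysis.Analysis"
begin

definition gamma_density :: "real \<Rightarrow> real \<Rightarrow> real \<Rightarrow> real" where
  "gamma_density k s x =
     (if 0 < x then x powr (k - 1) * exp (- x / s) / (Gamma k * s powr k) else 0)"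

text \<open>The Gamma distribution with shape k and scale s, as a measure on the reals
  (the law of the random variable h).\<close>
definition gamma_distr :: "real \<Rightarrow> real \<Rightarrow> real measure" where
  "gamma_distr k s = density lborel (\<lambda>x. ennreal (gamma_density k s x))"

end

theory Submission
  imports Defs
begin

lemma gamma_nn:
  assumes a: "a > 0" and s: "s > 0"
  shows "(\<integral>\<^sup>+x. ennreal (indicator {0<..} x * x powr (a-1) * exp (-x/s)) \<partial>lborel)
         = ennreal (s powr a * Gamma a)"
proof -
  define N where "N = (\<integral>\<^sup>+x. ennreal (indicator {0<..} x * x powr (a-1) * exp (-x/s)) \<partial>lborel)"
  have "ennreal (Gamma a) = (\<integral>\<^sup>+t. ennreal (indicator {0..} t * t powr (a - 1) / exp t) \<partial>lborel)"
    by (rule Gamma_conv_nn_integral_real[OF a])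
  also have "\<dots> = ennreal \<bar>1/s\<bar> * (\<integral>\<^sup>+x. ennreal (indicator {0..} (0 + (1/s)*x) * (0 + (1/s)*x) powr (a - 1) / exp (0 + (1/s)*x)) \<partial>lborel)"
    by (rule nn_integral_real_affine) (use s in auto)
  also have "(\<integral>\<^sup>+x. ennreal (indicator {0..} (0 + (1/s)*x) * (0 + (1/s)*x) powr (a - 1) / exp (0 + (1/s)*x)) \<partial>lborel)
      = (\<integral>\<^sup>+x. ennreal (s powr (1-a)) * ennreal (indicator {0<..} x * x powr (a-1) * exp (-x/s)) \<partial>lborel)"
  proof (rule nn_integral_cong)
    fix x :: real
    show "ennreal (indicator {0..} (0 + (1/s)*x) * (0 + (1/s)*x) powr (a - 1) / exp (0 + (1/s)*x))
        = ennreal (s powr (1-a)) * ennreal (indicator {0<..} x * x powr (a-1) * exp (-x/s))"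
    proof (cases "x > 0")
      case True
      have "(x/s) powr (a-1) = x powr (a-1) * s powr (1-a)"
        using True s by (simp add: powr_divide powr_minus_divide divide_simps powr_diff powr_add)
      then show ?thesis using True s
        by (simp add: ennreal_mult'[symmetric] exp_minus field_simps)
    next
      case False
      then have "x/s \<le> 0" using s by (simp add: divide_nonpos_pos)
      then show ?thesis using False s by (cases "x = 0") (auto simp: indicator_def)
    qed
  qed
  also have "\<dots> = ennreal (s powr (1-a)) * N"
    unfolding N_def by (rule nn_integral_cmult) auto
  finally have E: "ennreal (Gamma a) = ennreal (s powr (-a)) * N"
    using s by (simp add: mult.assoc[symmetric] ennreal_mult[symmetric] powr_diff powr_minus divide_simps)
  have "ennreal (s powr a * Gamma a) = ennreal (s powr a) * ennreal (s powr (-a)) * N"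
    using E a by (simp add: ennreal_mult Gamma_real_pos mult.assoc)
  also have "\<dots> = N" using s by (simp add: ennreal_mult[symmetric] powr_minus)
  finally show ?thesis unfolding N_def by simp
qed

lemma gd_meas[measurable]: "(\<lambda>x. gamma_density k s x) \<in> borel_measurable borel"
  unfolding gamma_density_def by measurable

lemma gd_nonneg: "k > 0 \<Longrightarrow> s > 0 \<Longrightarrow> gamma_density k s x \<ge> 0"
  unfolding gamma_density_def by (auto intro!: divide_nonneg_pos mult_pos_pos)

lemma meas_gd[measurable_cong, simp]: "sets (gamma_distr k s) = sets borel"
  unfolding gamma_distr_def by simp

lemma gamma_moment:
  assumes k: "k > 0" and s: "s > 0" and t: "k + t > 0"
  shows "has_bochner_integral (gamma_distr k s) (\<lambda>x. x powr t) (s powr t * Gamma (k+t) / Gamma k)"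
proof (rule has_bochner_integral_nn_integral)
  show "(\<lambda>x. x powr t) \<in> borel_measurable (gamma_distr k s)" by measurable
  show "AE x in gamma_distr k s. 0 \<le> x powr t" by simp
  show "0 \<le> s powr t * Gamma (k+t) / Gamma k" using k t by (simp add: Gamma_real_pos less_imp_le)
  have "(\<integral>\<^sup>+x. ennreal (x powr t) \<partial>gamma_distr k s)
      = (\<integral>\<^sup>+x. ennreal (gamma_density k s x) * ennreal (x powr t) \<partial>lborel)"
    unfolding gamma_distr_def by (rule nn_integral_density) auto
  also have "\<dots> = (\<integral>\<^sup>+x. ennreal (1 / (Gamma k * s powr k)) * ennreal (indicator {0<..} x * x powr (k+t-1) * exp (-x/s)) \<partial>lborel)"
  proof (rule nn_integral_cong)
    fix x :: real
    show "ennreal (gamma_density k s x) * ennreal (x powr t) = ennreal (1 / (Gamma k * s powr k)) * ennreal (indicator {0<..} x * x powr (k+t-1) * exp (-x/s))"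
    proof (cases "x > 0")
      case True
      have "x powr (k+t-1) = x powr (k-1) * x powr t" using True by (simp add: powr_add[symmetric] algebra_simps)
      then show ?thesis using True k s
        by (simp add: gamma_density_def ennreal_mult'[symmetric] Gamma_real_pos)
    qed (simp add: gamma_density_def)
  qed
  also have "\<dots> = ennreal (1 / (Gamma k * s powr k)) * ennreal (s powr (k+t) * Gamma (k+t))"
    using gamma_nn[OF t s] by (simp add: nn_integral_cmult del: ennreal_mult)
  also have "\<dots> = ennreal (s powr t * Gamma (k+t) / Gamma k)"
    using k s t by (simp add: ennreal_mult[symmetric] Gamma_real_pos powr_add)
  finally show "(\<integral>\<^sup>+x. ennreal (x powr t) \<partial>gamma_distr k s) = ennreal (s powr t * Gamma (k+t) / Gamma k)" .
qed


lemma Gamma_nz: "(k::real) > 0 \<Longrightarrow> Gamma k \<noteq> 0"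
proof -
  assume "k > 0" then have "Gamma k > 0" by (rule Gamma_real_pos)
  then show ?thesis by simp
qed

lemma gamma_AE_pos:
  assumes "k > 0" "s > 0"
  shows "AE x in gamma_distr k s. 0 < x"
  unfolding gamma_distr_def
  by (subst AE_density) (auto simp: gamma_density_def)

lemma gamma_powr:
  assumes k: "k > 0" and s: "s > 0" and t: "k + t > 0"
  shows "integrable (gamma_distr k s) (\<lambda>x. x powr t)"
    "(\<integral>x. x powr t \<partial>gamma_distr k s) = s powr t * Gamma (k+t) / Gamma k"
  using gamma_moment[OF assms] by (auto simp: has_bochner_integral_iff)

lemma gamma_const:
  fixes c :: real
  assumes k: "k > 0" and s: "s > 0"
  shows "integrable (gamma_distr k s) (\<lambda>x. c)" "(\<integral>x. c \<partial>gamma_distr k s) = c"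
proof -
  have "has_bochner_integral (gamma_distr k s) (\<lambda>x. x powr 0) 1"
    using gamma_moment[OF k s, of 0] k s by (simp add: Gamma_nz)
  moreover have "has_bochner_integral (gamma_distr k s) (\<lambda>x. x powr 0) 1 = has_bochner_integral (gamma_distr k s) (\<lambda>x. 1::real) 1"
    by (rule has_bochner_integral_cong_AE[where f="\<lambda>x. x powr 0" and g="\<lambda>x. 1"]) (use gamma_AE_pos[OF k s] in \<open>auto elim: AE_mp\<close>)
  ultimately have "has_bochner_integral (gamma_distr k s) (\<lambda>x. 1::real) 1" by simp
  then have "has_bochner_integral (gamma_distr k s) (\<lambda>x. c * 1) (c * 1)"
    by (rule has_bochner_integral_mult_right)
  then show "integrable (gamma_distr k s) (\<lambda>x. c)" "(\<integral>x. c \<partial>gamma_distr k s) = c"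
    by (auto simp: has_bochner_integral_iff)
qed

lemma gamma_measure_space:
  assumes k: "k > 0" and s: "s > 0"
  shows "measure (gamma_distr k s) (space (gamma_distr k s)) = 1"
  using gamma_const(2)[OF k s, of 1] by simp

lemma ln_le_powr: "(x::real) > 0 \<Longrightarrow> t > 0 \<Longrightarrow> ln x \<le> (x powr t - 1) / t"
proof -
  assume x: "x > 0" and t: "t > 0"
  have "t * ln x \<le> x powr t - 1" using ln_le_minus_one[of "x powr t"] x by (simp add: ln_powr)
  then show ?thesis using t by (simp add: field_simps)
qed

lemma ln_ge_powr: "(x::real) > 0 \<Longrightarrow> t < 0 \<Longrightarrow> (x powr t - 1) / t \<le> ln x"
proof -
  assume x: "x > 0" and t: "t < 0"
  have "t * ln x \<le> x powr t - 1" using ln_le_minus_one[of "x powr t"] x by (simp add: ln_powr)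
  then show ?thesis using t by (simp add: field_simps)
qed

lemma abs_ln_le: "(x::real) > 0 \<Longrightarrow> t > 0 \<Longrightarrow> \<bar>ln x\<bar> \<le> (x powr t + x powr (-t)) / t"
proof -
  assume x: "x > 0" and t: "t > 0"
  have a: "ln x \<le> (x powr t - 1) / t" by (rule ln_le_powr[OF x t])
  have b: "(x powr (-t) - 1) / (-t) \<le> ln x" by (rule ln_ge_powr[OF x]) (use t in simp)
  have c: "0 \<le> x powr t / t" "0 \<le> x powr (-t) / t" using t by auto
  have a': "t * ln x \<le> x powr t - 1" using ln_le_minus_one[of "x powr t"] x by (simp add: ln_powr)
  have b': "-t * ln x \<le> x powr (-t) - 1" using ln_le_minus_one[of "x powr (-t)"] x by (simp add: ln_powr)
  have d: "0 < x powr t" "0 < x powr (-t)" using x by auto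
  have "\<bar>t * ln x\<bar> \<le> x powr t + x powr (-t)" unfolding abs_le_iff using a' b' d by linarith
  then have "t * \<bar>ln x\<bar> \<le> x powr t + x powr (-t)" using t by (simp add: abs_mult)
  then show ?thesis using t by (simp add: field_simps)
qed

lemma gamma_ln_integrable:
  assumes k: "k > 0" and s: "s > 0"
  shows "integrable (gamma_distr k s) ln"
proof -
  define t where "t = k/2"
  have t: "t > 0" "k + t > 0" "k + (-t) > 0" using k by (auto simp: t_def)
  have i: "integrable (gamma_distr k s) (\<lambda>x. (x powr t + x powr (-t)) / t)"
    using gamma_powr(1)[OF k s t(2)] gamma_powr(1)[OF k s t(3)] by auto
  have m: "ln \<in> borel_measurable (gamma_distr k s)" by measurable
  have "AE x in gamma_distr k s. norm (ln x) \<le> norm ((x powr t + x powr (-t)) / t)"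
    using gamma_AE_pos[OF k s] by eventually_elim (use abs_ln_le t in auto)
  then show ?thesis using Bochner_Integration.integrable_bound[OF i m] by blast
qed

lemma gamma_ln_integral:
  assumes k: "k > 0" and s: "s > 0"
  shows "(\<integral>x. ln x \<partial>gamma_distr k s) = ln s + Digamma k"
proof -
  let ?M = "gamma_distr k s"
  let ?E = "\<integral>x. ln x \<partial>?M"
  define F where "F t = exp (t * ln s) * Gamma (k + t) / Gamma k" for t
  have F0: "F 0 = 1" using k by (simp add: F_def Gamma_nz)
  have Fpow: "F t = s powr t * Gamma (k+t) / Gamma k" for t using s by (simp add: F_def powr_def)
  have "(F has_field_derivative (ln s + Digamma k)) (at 0)"
    unfolding F_def using k Gamma_nz[OF k]
    by (auto intro!: derivative_eq_intros simp: nonpos_Ints_def field_simps)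
  then have Q: "((\<lambda>t. (F t - 1) / t) \<longlongrightarrow> ln s + Digamma k) (at 0)"
    using F0 by (simp add: has_field_derivative_iff)
  have intF: "(\<integral>x. (x powr t - 1) / t \<partial>?M) = (F t - 1) / t" if "k + t > 0" for t
    using gamma_powr[OF k s that] gamma_const[OF k s]
    by (simp add: Fpow)
  have intQ: "integrable ?M (\<lambda>x. (x powr t - 1) / t)" if "k + t > 0" for t
    using gamma_powr[OF k s that] gamma_const[OF k s] by auto
  have lnI: "integrable ?M ln" by (rule gamma_ln_integrable[OF k s])
  have up: "?E \<le> ln s + Digamma k"
  proof (rule tendsto_lowerbound)
    show "((\<lambda>t. (F t - 1) / t) \<longlongrightarrow> ln s + Digamma k) (at_right 0)"
      using Q by (rule filterlim_mono) (simp_all add: at_le)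
    show "\<forall>\<^sub>F t in at_right 0. ?E \<le> (F t - 1) / t"
      using eventually_at_right_less[of "0::real"]
    proof eventually_elim
      case (elim t)
      then have "?E \<le> (\<integral>x. (x powr t - 1) / t \<partial>?M)"
        using k by (intro integral_mono_AE lnI intQ)
          (use gamma_AE_pos[OF k s] ln_le_powr in \<open>auto elim: AE_mp\<close>)
      then show ?case using intF[of t] elim k by simp
    qed
  qed simp
  have lo: "ln s + Digamma k \<le> ?E"
  proof (rule tendsto_upperbound)
    show "((\<lambda>t. (F t - 1) / t) \<longlongrightarrow> ln s + Digamma k) (at_left 0)"
      using Q by (rule filterlim_mono) (simp_all add: at_le)
    show "\<forall>\<^sub>F t in at_left 0. (F t - 1) / t \<le> ?E"
    proof -
      have ev: "eventually (\<lambda>t. t \<in> {-k<..<0}) (at_left (0::real))"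
        using k by (intro eventually_at_left_real) simp
      from ev show ?thesis
    proof eventually_elim
      case (elim t)
      then have "(\<integral>x. (x powr t - 1) / t \<partial>?M) \<le> ?E"
        by (intro integral_mono_AE lnI intQ)
          (use gamma_AE_pos[OF k s] ln_ge_powr in \<open>auto elim: AE_mp\<close>)
      then show ?case using intF[of t] elim by simp
    qed
    qed
  qed simp
  from up lo show ?thesis by simp
qed


lemma ln1p_le_powr:
  fixes v t :: real
  assumes v: "v > 0" and t: "0 < t" "t \<le> 1"
  shows "ln (1 + v) \<le> v powr t / t"
proof (cases "v \<le> 1")
  case True
  have "ln (1 + v) \<le> v" using v by (intro ln_add_one_self_le_self) simp
  also have "v \<le> v powr t"
    using powr_mono'[of t 1 v] True v t by simp
  also have "v powr t \<le> v powr t / t" using t v by (simp add: le_divide_eq)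
  finally show ?thesis .
next
  case False
  have "ln (1 + v) \<le> ln (2 * v)" using False v by simp
  also have "\<dots> = ln 2 + ln v" using v by (simp add: ln_mult)
  also have "ln v \<le> (v powr t - 1) / t" by (rule ln_le_powr) (use v t in auto)
  moreover have "ln 2 < (1::real)" using ln_2_less_1 .
  moreover have "1 \<le> 1 / t" using t by simp
  moreover have "(v powr t - 1)/t = v powr t / t - 1/t" by (simp add: diff_divide_distrib)
  ultimately show ?thesis by linarith
qed

lemma gamma_mean:
  assumes k: "k > 0" and s: "s > 0"
  shows "integrable (gamma_distr k s) (\<lambda>x. x)" "(\<integral>x. x \<partial>gamma_distr k s) = k * s"
proof -
  have ae: "AE x in gamma_distr k s. x powr 1 = x" using gamma_AE_pos[OF k s] by (auto elim: AE_mp)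
  have G: "Gamma (k + 1) = k * Gamma k" using Gamma_plus1[of k] k by (auto simp: nonpos_Ints_def)
  have i: "integrable (gamma_distr k s) (\<lambda>x. x powr 1)" using gamma_powr(1)[OF k s, of 1] k by simp
  have v: "(\<integral>x. x powr 1 \<partial>gamma_distr k s) = k * s"
    using gamma_powr(2)[OF k s, of 1] k s G Gamma_nz[OF k] by (simp del: powr_one_gt_zero_iff)
  show "integrable (gamma_distr k s) (\<lambda>x. x)"
    by (rule integrable_cong_AE_imp[OF i]) (use ae in auto)
  have "(\<integral>x. x powr 1 \<partial>gamma_distr k s) = (\<integral>x. x \<partial>gamma_distr k s)"
    by (rule integral_cong_AE) (use ae in auto)
  then show "(\<integral>x. x \<partial>gamma_distr k s) = k * s" using v by simp
qed

lemma gamma_ln1p_integrable: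
  assumes k: "k > 0" and s: "s > 0" and a: "a \<ge> 0"
  shows "integrable (gamma_distr k s) (\<lambda>h. ln (1 + a * h))"
proof -
  have i: "integrable (gamma_distr k s) (\<lambda>h. a * h)"
    using gamma_mean(1)[OF k s] by auto
  have m: "(\<lambda>h. ln (1 + a * h)) \<in> borel_measurable (gamma_distr k s)" by measurable
  have "AE h in gamma_distr k s. norm (ln (1 + a * h)) \<le> norm (a * h)"
    using gamma_AE_pos[OF k s]
  proof eventually_elim
    case (elim h)
    have "0 \<le> ln (1 + a * h)" using a elim by simp
    moreover have "ln (1 + a * h) \<le> a * h" using a elim by (intro ln_add_one_self_le_self) simp
    ultimately show ?case using elim a by simp
  qed
  then show ?thesis using Bochner_Integration.integrable_bound[OF i m] by blast
qed

lemma jensen_pt: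
  fixes b u :: real
  assumes b: "b \<ge> 0"
  shows "ln (1 + b) + b / (1 + b) * u \<le> ln (1 + b * exp u)"
proof -
  define w where "w = b / (1 + b)"
  have w: "0 \<le> w" "w \<le> 1" using b by (auto simp: w_def)
  have "exp ((1 - w) *\<^sub>R 0 + w *\<^sub>R u) \<le> (1 - w) * exp 0 + w * exp u"
    by (rule convex_onD[OF exp_convex]) (use w in auto)
  then have "exp (w * u) \<le> (1 + b * exp u) / (1 + b)"
    using b by (simp add: w_def field_simps)
  moreover have pos: "1 + b * exp u > 0" "1 + b > 0" using b by (auto intro: add_pos_nonneg)
  ultimately have "w * u \<le> ln ((1 + b * exp u) / (1 + b))"
    by (subst ln_ge_iff) auto
  also have "\<dots> = ln (1 + b * exp u) - ln (1 + b)"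
    using pos by (subst ln_div) auto
  finally show ?thesis by (simp add: w_def)
qed

lemma gamma_jensen:
  assumes k: "k > 0" and s: "s > 0" and a: "a \<ge> 0"
  shows "ln (1 + a * (s * exp (Digamma k))) \<le> (\<integral>h. ln (1 + a * h) \<partial>gamma_distr k s)"
proof -
  let ?M = "gamma_distr k s"
  define y0 where "y0 = s * exp (Digamma k)"
  define b where "b = a * y0"
  have y0: "y0 > 0" using s by (simp add: y0_def)
  have b: "b \<ge> 0" using a y0 by (simp add: b_def)
  have lny0: "ln y0 = ln s + Digamma k" using s by (simp add: y0_def ln_mult)
  have iL: "integrable ?M (\<lambda>h. ln (1 + b) + b / (1 + b) * (ln h - ln y0))"
    using gamma_ln_integrable[OF k s] gamma_const[OF k s] by auto
  have "(\<integral>h. ln (1 + b) + b / (1 + b) * (ln h - ln y0) \<partial>?M) = ln (1 + b)"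
    using gamma_ln_integrable[OF k s] gamma_const[OF k s] gamma_ln_integral[OF k s] lny0
      gamma_measure_space[OF k s]
    by (simp add: integral_add integral_diff)
  moreover have "(\<integral>h. ln (1 + b) + b / (1 + b) * (ln h - ln y0) \<partial>?M) \<le> (\<integral>h. ln (1 + a * h) \<partial>?M)"
  proof (rule integral_mono_AE[OF iL gamma_ln1p_integrable[OF k s a]])
    show "AE h in ?M. ln (1 + b) + b / (1 + b) * (ln h - ln y0) \<le> ln (1 + a * h)"
      using gamma_AE_pos[OF k s]
    proof eventually_elim
      case (elim h)
      have "b * exp (ln h - ln y0) = a * h" using elim y0
        by (simp add: b_def exp_diff)
      then show ?case using jensen_pt[OF b, of "ln h - ln y0"] by simp
    qed
  qed
  ultimately show ?thesis by (simp add: b_def y0_def)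
qed

lemma gamma_upper_a:
  assumes k: "k > 0" and s: "s > 0" and a: "a > 0"
  defines "t \<equiv> min 1 (k/2)"
  shows "(\<integral>h. ln (1 + a * h) \<partial>gamma_distr k s) - ln (1 + a * (s * exp (Digamma k)))
           \<le> a powr (-t) * (s powr (-t) * Gamma (k + -t) / Gamma k / t)"
proof -
  let ?M = "gamma_distr k s"
  define y0 where "y0 = s * exp (Digamma k)"
  have y0: "y0 > 0" using s by (simp add: y0_def)
  have t: "0 < t" "t \<le> 1" "k + -t > 0" using k by (auto simp: t_def)
  have iU: "integrable ?M (\<lambda>h. ln a + ln h + a powr (-t) * (h powr (-t)) / t)"
    using gamma_ln_integrable[OF k s] gamma_const[OF k s] gamma_powr(1)[OF k s t(3)] by auto
  have "(\<integral>h. ln (1 + a * h) \<partial>?M) \<le> (\<integral>h. ln a + ln h + a powr (-t) * (h powr (-t)) / t \<partial>?M)"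
  proof (rule integral_mono_AE[OF gamma_ln1p_integrable[OF k s] iU])
    show "a \<ge> 0" using a by simp
    show "AE h in ?M. ln (1 + a * h) \<le> ln a + ln h + a powr (-t) * (h powr (-t)) / t"
      using gamma_AE_pos[OF k s]
    proof eventually_elim
      case (elim h)
      have ah: "a * h > 0" using a elim by simp
      have "1 + a * h = (a * h) * (1 + 1 / (a * h))" using ah a elim by (simp add: distrib_left)
      then have e1: "ln (1 + a * h) = ln (a * h) + ln (1 + 1 / (a * h))"
        using ah ln_mult_pos[of "a * h" "1 + 1 / (a * h)"] by (simp add: add_pos_pos)
      have e2: "ln (1 + 1 / (a * h)) \<le> (1 / (a * h)) powr t / t"
        by (rule ln1p_le_powr) (use ah t in auto)
      have e3: "(1 / (a * h)) powr t = a powr (-t) * h powr (-t)"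
        using a elim by (simp add: powr_divide powr_minus_divide powr_mult)
      have e4: "ln (a * h) = ln a + ln h" using a elim by (simp add: ln_mult)
      from e1 e2 e3 e4 show ?case by simp
    qed
  qed
  also have "\<dots> = ln a + (ln s + Digamma k) + a powr (-t) * (s powr (-t) * Gamma (k + -t) / Gamma k) / t"
    using gamma_ln_integrable[OF k s] gamma_const[OF k s] gamma_powr[OF k s t(3)] gamma_ln_integral[OF k s]
      gamma_measure_space[OF k s]
    by (simp add: integral_add)
  also have "ln a + (ln s + Digamma k) = ln (a * y0)" using a s by (simp add: y0_def ln_mult)
  also have "ln (a * y0) \<le> ln (1 + a * y0)" using a y0 by (subst ln_le_cancel_iff) (auto intro: add_pos_pos)
  finally show ?thesis by (simp add: y0_def)
qed


lemma gamma_upper_k: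
  assumes k: "k > 0" and s: "s > 0" and a: "a \<ge> 0"
  shows "(\<integral>h. ln (1 + a * h) \<partial>gamma_distr k s) \<le> ln (1 + a * (k * s))"
proof -
  let ?M = "gamma_distr k s"
  define m where "m = k * s"
  have m: "m > 0" using k s by (simp add: m_def)
  have z: "1 + a * m > 0" using a m by (simp add: add_pos_nonneg)
  have iU: "integrable ?M (\<lambda>h. ln (1 + a * m) + a * (h - m) / (1 + a * m))"
    using gamma_mean[OF k s] gamma_const[OF k s] by auto
  have "(\<integral>h. ln (1 + a * h) \<partial>?M) \<le> (\<integral>h. ln (1 + a * m) + a * (h - m) / (1 + a * m) \<partial>?M)"
  proof (rule integral_mono_AE[OF gamma_ln1p_integrable[OF k s a] iU])
    show "AE h in ?M. ln (1 + a * h) \<le> ln (1 + a * m) + a * (h - m) / (1 + a * m)"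
      using gamma_AE_pos[OF k s]
    proof eventually_elim
      case (elim h)
      have y: "1 + a * h > 0" using a elim by (simp add: add_pos_nonneg)
      have "ln ((1 + a * h) / (1 + a * m)) \<le> (1 + a * h) / (1 + a * m) - 1"
        by (rule ln_le_minus_one) (use y z in simp)
      moreover have "ln ((1 + a * h) / (1 + a * m)) = ln (1 + a * h) - ln (1 + a * m)"
        using y z by (simp add: ln_div)
      moreover have "(1 + a * h) / (1 + a * m) - 1 = a * (h - m) / (1 + a * m)"
        using z by (simp add: field_simps)
      ultimately show ?case using elim by simp
    qed
  qed
  also have "\<dots> = ln (1 + a * m)"
    using gamma_mean[OF k s] gamma_const[OF k s] gamma_measure_space[OF k s]
    by (simp add: integral_add integral_diff m_def)
  finally show ?thesis by (simp add: m_def)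
qed

lemma digamma_bounds:
  fixes k :: real
  assumes k: "k > 1"
  shows "Digamma k - ln k \<le> 0" "- 1 / (k - 1) \<le> Digamma k - ln k"
proof -
  have k0: "k > 0" using k by auto
  have s: "1 / k > 0" using k by auto
  let ?M = "gamma_distr k (1/k)"
  have E: "(\<integral>x. ln x \<partial>?M) = Digamma k - ln k"
    using gamma_ln_integral[OF k0 s] k0 by (simp add: ln_div)
  have "(\<integral>x. ln x \<partial>?M) \<le> (\<integral>x. x - 1 \<partial>?M)"
    by (rule integral_mono_AE[OF gamma_ln_integrable[OF k0 s]])
      (use gamma_mean[OF k0 s] gamma_const[OF k0 s] gamma_AE_pos[OF k0 s] ln_le_minus_one in \<open>auto elim: AE_mp\<close>)
  also have "\<dots> = 0"
    using gamma_mean[OF k0 s] gamma_const[OF k0 s] gamma_measure_space[OF k0 s] k0 by (simp add: integral_diff)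
  finally show "Digamma k - ln k \<le> 0" using E by simp
  have k1: "k + -1 > 0" using k by simp
  have G: "Gamma k = (k - 1) * Gamma (k - 1)"
    using Gamma_plus1[of "k - 1"] k by (auto simp: nonpos_Ints_def)
  have "(\<integral>x. 1 - x powr (-1) \<partial>?M) \<le> (\<integral>x. ln x \<partial>?M)"
  proof (rule integral_mono_AE[OF _ gamma_ln_integrable[OF k0 s]])
    show "integrable ?M (\<lambda>x. 1 - x powr (-1))" using gamma_powr(1)[OF k0 s k1] gamma_const[OF k0 s] by auto
    show "AE x in ?M. 1 - x powr (-1) \<le> ln x"
      using gamma_AE_pos[OF k0 s]
    proof eventually_elim
      case (elim x)
      have "ln (1/x) \<le> 1/x - 1" by (rule ln_le_minus_one) (use elim in simp)
      then show ?case using elim by (simp add: ln_div powr_minus_divide)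
    qed
  qed
  also have "(\<integral>x. 1 - x powr (-1) \<partial>?M) = 1 - k / (k - 1)"
  proof -
    have g1: "Gamma (k - 1) > 0" using k by (intro Gamma_real_pos) simp
    have "(\<integral>x. x powr (-1) \<partial>?M) = (1/k) powr (-1) * Gamma (k + -1) / Gamma k"
      by (rule gamma_powr(2)[OF k0 s k1])
    also have "\<dots> = k / (k - 1)" using k g1 unfolding G by (simp add: powr_minus_divide less_imp_neq[OF g1, symmetric])
    finally have "(\<integral>x. x powr (-1) \<partial>?M) = k / (k - 1)" .
    moreover have "(\<integral>x. 1 - x powr (-1) \<partial>?M) = (\<integral>x. 1 \<partial>?M) - (\<integral>x. x powr (-1) \<partial>?M)"
      by (rule Bochner_Integration.integral_diff) (use gamma_powr(1)[OF k0 s k1] gamma_const[OF k0 s] in auto)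
    ultimately show ?thesis using gamma_const(2)[OF k0 s, of 1] by simp
  qed
  finally have "1 - k / (k - 1) \<le> Digamma k - ln k" using E by simp
  moreover have "1 - k / (k - 1) = -1 / (k - 1)" using k by (simp add: field_simps)
  ultimately show "- 1 / (k - 1) \<le> Digamma k - ln k" by simp
qed


lemma lim_inv_km1: "((\<lambda>k::real. - 1 / (k - 1)) \<longlongrightarrow> 0) at_top"
proof -
  have f: "filterlim (\<lambda>k::real. -1 + k) at_top at_top"
    by (rule filterlim_tendsto_add_at_top[OF tendsto_const filterlim_ident])
  have "((\<lambda>k::real. - 1 / (-1 + k)) \<longlongrightarrow> 0) at_top"
    by (rule tendsto_divide_0[OF tendsto_const filterlim_at_top_imp_at_infinity[OF f]])
  then show ?thesis by simp
qed

lemma digamma_ln_lim: "((\<lambda>k::real. Digamma k - ln k) \<longlongrightarrow> 0) at_top"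
proof (rule tendsto_sandwich[OF _ _ lim_inv_km1 tendsto_const])
  show "\<forall>\<^sub>F k in at_top. - 1 / (k - 1) \<le> Digamma k - ln (k::real)"
    using eventually_gt_at_top[of "1::real"] by eventually_elim (rule digamma_bounds(2))
  show "\<forall>\<^sub>F k in at_top. Digamma k - ln (k::real) \<le> (0::real)"
    using eventually_gt_at_top[of "1::real"] by eventually_elim (rule digamma_bounds(1))
qed

theorem lemma1:
  fixes \<kappa> g p \<delta>2 :: real
  assumes "\<kappa> > 0" and "g > 0" and "p \<ge> 0" and "\<delta>2 > 0"
  shows "integrable (gamma_distr \<kappa> (g / \<kappa>)) (\<lambda>h. log 2 (1 + p * h / \<delta>2))
       \<and> (\<integral>h. log 2 (1 + p * h / \<delta>2) \<partial>gamma_distr \<kappa> (g / \<kappa>))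
           \<ge> log 2 (1 + (exp (Digamma \<kappa>) / \<kappa>) * (p * g / \<delta>2))
       \<and> ((\<lambda>q. (\<integral>h. log 2 (1 + q * h / \<delta>2) \<partial>gamma_distr \<kappa> (g / \<kappa>))
                 - log 2 (1 + (exp (Digamma \<kappa>) / \<kappa>) * (q * g / \<delta>2)))
            \<longlongrightarrow> 0) at_top
       \<and> ((\<lambda>k. (\<integral>h. log 2 (1 + p * h / \<delta>2) \<partial>gamma_distr k (g / k))
                 - log 2 (1 + (exp (Digamma k) / k) * (p * g / \<delta>2)))
            \<longlongrightarrow> 0) at_top"
proof -
  note kp = assms(1) and gp = assms(2) and pp = assms(3) and dp = assms(4)
  define a where "a = p / \<delta>2"
  have a: "a \<ge> 0" using pp dp by (simp add: a_def)
  have s: "g / \<kappa> > 0" using kp gp by simp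
  have L2: "ln (2::real) > 0" by simp
  have fun_eq: "(\<lambda>h. log 2 (1 + q * h / \<delta>2)) = (\<lambda>h. ln (1 + (q / \<delta>2) * h) / ln 2)" for q
    by (simp add: log_def)
  have int_eq: "(\<integral>h. log 2 (1 + q * h / \<delta>2) \<partial>M) = (\<integral>h. ln (1 + (q / \<delta>2) * h) \<partial>M) / ln 2" for q M
    unfolding fun_eq by simp
  have rhs_eq: "log 2 (1 + (exp (Digamma k) / k) * (q * g / \<delta>2)) = ln (1 + (q / \<delta>2) * ((g / k) * exp (Digamma k))) / ln 2" for k q :: real
  proof -
    have "(exp (Digamma k) / k) * (q * g / \<delta>2) = (q / \<delta>2) * ((g / k) * exp (Digamma k))"
      by (simp add: divide_inverse mult_ac)
    then show ?thesis by (simp add: log_def)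
  qed
  have P1: "integrable (gamma_distr \<kappa> (g / \<kappa>)) (\<lambda>h. log 2 (1 + p * h / \<delta>2))"
    unfolding fun_eq using gamma_ln1p_integrable[OF kp s a] by (simp add: a_def)
  have P2: "(\<integral>h. log 2 (1 + p * h / \<delta>2) \<partial>gamma_distr \<kappa> (g / \<kappa>))
           \<ge> log 2 (1 + (exp (Digamma \<kappa>) / \<kappa>) * (p * g / \<delta>2))"
    unfolding int_eq rhs_eq using gamma_jensen[OF kp s a] L2
    by (simp add: a_def divide_right_mono)
  have P3: "((\<lambda>q. (\<integral>h. log 2 (1 + q * h / \<delta>2) \<partial>gamma_distr \<kappa> (g / \<kappa>))
                 - log 2 (1 + (exp (Digamma \<kappa>) / \<kappa>) * (q * g / \<delta>2))) \<longlongrightarrow> 0) at_top"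
  proof -
    define t where "t = min 1 (\<kappa>/2)"
    have t: "t > 0" using kp by (simp add: t_def)
    define C where "C = (g / \<kappa>) powr (-t) * Gamma (\<kappa> + -t) / Gamma \<kappa> / t"
    let ?D = "\<lambda>q. (\<integral>h. ln (1 + (q / \<delta>2) * h) \<partial>gamma_distr \<kappa> (g / \<kappa>))
                 - ln (1 + (q / \<delta>2) * ((g / \<kappa>) * exp (Digamma \<kappa>)))"
    have "((\<lambda>q. ?D q / ln 2) \<longlongrightarrow> 0) at_top"
    proof (rule tendsto_sandwich[OF _ _ tendsto_const])
      show "\<forall>\<^sub>F q in at_top. 0 \<le> ?D q / ln 2"
        using eventually_ge_at_top[of "0::real"]
      proof eventually_elim
        case (elim q)
        then have "q / \<delta>2 \<ge> 0" using dp by simp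
        from gamma_jensen[OF kp s this] show ?case using L2 by simp
      qed
      show "\<forall>\<^sub>F q in at_top. ?D q / ln 2 \<le> (q / \<delta>2) powr (-t) * C / ln 2"
        using eventually_gt_at_top[of "0::real"]
      proof eventually_elim
        case (elim q)
        then have qp: "q / \<delta>2 > 0" using dp by simp
        have "?D q \<le> (q / \<delta>2) powr (-t) * C"
          using gamma_upper_a[OF kp s qp] by (simp only: C_def t_def)
        from divide_right_mono[OF this less_imp_le[OF L2]] show ?case .
      qed
      have f: "filterlim (\<lambda>q. (1 / \<delta>2) * q) at_top at_top"
        by (rule filterlim_tendsto_pos_mult_at_top[OF tendsto_const _ filterlim_ident]) (use dp in simp)
      have "((\<lambda>q. ((1 / \<delta>2) * q) powr (-t)) \<longlongrightarrow> 0) at_top"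
        by (rule tendsto_neg_powr[OF _ f]) (use t in simp)
      then have "((\<lambda>q. (q / \<delta>2) powr (-t)) \<longlongrightarrow> 0) at_top" by simp
      then have "((\<lambda>q. (q / \<delta>2) powr (-t) * C / ln 2) \<longlongrightarrow> 0 * C / ln 2) at_top"
        by (intro tendsto_divide tendsto_mult tendsto_const) auto
      then show "((\<lambda>q. (q / \<delta>2) powr (-t) * C / ln 2) \<longlongrightarrow> 0) at_top" by simp
    qed
    then show ?thesis unfolding int_eq rhs_eq by (simp add: diff_divide_distrib)
  qed
  have P4: "((\<lambda>k. (\<integral>h. log 2 (1 + p * h / \<delta>2) \<partial>gamma_distr k (g / k))
                 - log 2 (1 + (exp (Digamma k) / k) * (p * g / \<delta>2))) \<longlongrightarrow> 0) at_top"
  proof -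
    let ?D = "\<lambda>k. (\<integral>h. ln (1 + a * h) \<partial>gamma_distr k (g / k))
                 - ln (1 + a * ((g / k) * exp (Digamma k)))"
    have "((\<lambda>k. ?D k / ln 2) \<longlongrightarrow> 0) at_top"
    proof (rule tendsto_sandwich[OF _ _ tendsto_const])
      show "\<forall>\<^sub>F k in at_top. 0 \<le> ?D k / ln 2"
        using eventually_gt_at_top[of "0::real"]
      proof eventually_elim
        case (elim k)
        have "g / k > 0" using elim gp by simp
        from gamma_jensen[OF elim this a] show ?case using L2 by simp
      qed
      show "\<forall>\<^sub>F k in at_top. ?D k / ln 2 \<le> (ln (1 + a * g) - ln (1 + a * (g * exp (Digamma k - ln k)))) / ln 2"
        using eventually_gt_at_top[of "0::real"]
      proof eventually_elim
        case (elim k)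
        have sk: "g / k > 0" using elim gp by simp
        have "(g / k) * exp (Digamma k) = g * exp (Digamma k - ln k)"
          using elim by (simp add: exp_diff)
        moreover have "k * (g / k) = g" using elim by simp
        ultimately show ?case using gamma_upper_k[OF elim sk a] L2
          by (simp add: divide_right_mono)
      qed
      have "((\<lambda>k. (ln (1 + a * g) - ln (1 + a * (g * exp (Digamma k - ln k)))) / ln 2) \<longlongrightarrow>
             (ln (1 + a * g) - ln (1 + a * (g * exp 0))) / ln 2) at_top"
      proof -
        have "1 + a * g > 0" using a gp by (simp add: add_pos_nonneg)
        then show ?thesis by (intro tendsto_intros digamma_ln_lim) auto
      qed
      then show "((\<lambda>k. (ln (1 + a * g) - ln (1 + a * (g * exp (Digamma k - ln k)))) / ln 2) \<longlongrightarrow> 0) at_top"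
        by simp
    qed
    then show ?thesis unfolding int_eq rhs_eq by (simp add: diff_divide_distrib a_def)
  qed
  from P1 P2 P3 P4 show ?thesis by blast
qed

end
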